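(* Let $n\ge1$. If $\{H_1,H_2\}$ is a Hamilton decomposition of $G_{n,2}$ and $\{E_1,\dots,E_n\}$ is a Hamilton decomposition of $Q_{2n}$ (each $E_i$ taken as a directed Hamilton cycle starting at $\mathbf 0$), then $\{f(E_i,H_j): 1\le i\le n,\ 1\le j\le 2\}$ is a Hamilton decomposition of $Q_{4n}$.
   Context: A Hamilton decomposition of a graph is a partition of its edge set into edge-disjoint Hamilton cycles. The hypercube $Q_{2n}$ is realized as the graph whose vertices are the quaternary strings $q_1\cdots q_n$, $q_i\in\{0,1,2,3\}$, adjacent iff they differ in exactly one position and there by $\pm1\pmod 4$; $\mathbf 0=0\cdots0$. $G_{n,k}=C_{4^n}\Box\cdots\Box C_{4^n}$ ($k$ factors) has vertex set $(\mathbb Z/4^n\mathbb Z)^k$, vertices adjacent iff they differ in exactly one coordinate and there by $\pm1\pmod{4^n}$. For a directed Hamilton cycle $E$ of $Q_{2n}$ listing vertices $e_0=\mathbf 0,e_1,\dots,e_{4^n-1}$, put $\pi_E(e_p)=p$. Identify $V(Q_{4n})$ with pairs $(u,w)$ of quaternary strings of length $n$ ($Q_{4n}=Q_{2n}\Box Q_{2n}$), and let $\Phi_E(u,w)=(\pi_E(u),\pi_E(w))\in V(G_{n,2})$; $\Phi_E^{-1}$ maps edges of $G_{n,2}$ to edges of $Q_{4n}$. For a Hamilton cycle $H$ of $G_{n,2}$, $f(E,H):=\Phi_E^{-1}(H)$. *)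

theory Defs
  imports Main
begin

definition cycle_edges :: "'a list \<Rightarrow> 'a set set" where
  "cycle_edges vs = {{vs ! i, vs ! ((i + 1) mod length vs)} | i. i < length vs}"

definition ham_list :: "'a set \<Rightarrow> 'a set set \<Rightarrow> 'a list \<Rightarrow> bool" where
  "ham_list V E vs \<longleftrightarrow> distinct vs \<and> set vs = V \<and> 3 \<le> length vs \<and> cycle_edges vs \<subseteq> E"

definition ham_cycle :: "'a set \<Rightarrow> 'a set set \<Rightarrow> 'a set set \<Rightarrow> bool" where
  "ham_cycle V E C \<longleftrightarrow> (\<exists>vs. ham_list V E vs \<and> C = cycle_edges vs)"

definition ham_decomp :: "'a set \<Rightarrow> 'a set set \<Rightarrow> 'i set \<Rightarrow> ('i \<Rightarrow> 'a set set) \<Rightarrow> bool" where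
  "ham_decomp V E I C \<longleftrightarrow>
     (\<forall>i\<in>I. ham_cycle V E (C i)) \<and>
     (\<forall>i\<in>I. \<forall>j\<in>I. i \<noteq> j \<longrightarrow> C i \<inter> C j = {}) \<and>
     (\<Union>i\<in>I. C i) = E"

section \<open>The hypercube Q_{2n} on quaternary strings of length n\<close>

definition QV :: "nat \<Rightarrow> nat list set" where
  "QV n = {u. length u = n \<and> set u \<subseteq> {0..<4}}"

definition qadj :: "nat list \<Rightarrow> nat list \<Rightarrow> bool" where
  "qadj u v \<longleftrightarrow> length u = length v \<and>
     (\<exists>k < length u. (\<forall>j < length u. j \<noteq> k \<longrightarrow> u ! j = v ! j) \<and>
        (u ! k = (v ! k + 1) mod 4 \<or> v ! k = (u ! k + 1) mod 4))"

definition QE :: "nat \<Rightarrow> nat list set set" where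
  "QE n = {{u, v} | u v. u \<in> QV n \<and> v \<in> QV n \<and> qadj u v}"

text \<open>Q_{4n}, with vertices identified with pairs (u,w) of strings of length n
  (the string of length 2n being u followed by w).\<close>
definition QV2 :: "nat \<Rightarrow> (nat list \<times> nat list) set" where
  "QV2 n = QV n \<times> QV n"

definition QE2 :: "nat \<Rightarrow> (nat list \<times> nat list) set set" where
  "QE2 n = {{(u, w), (u', w')} | u w u' w'.
     (u, w) \<in> QV2 n \<and> (u', w') \<in> QV2 n \<and> qadj (u @ w) (u' @ w')}"

definition GV :: "nat \<Rightarrow> (nat \<times> nat) set" where
  "GV n = {0..<4 ^ n} \<times> {0..<4 ^ n}"

definition cadj :: "nat \<Rightarrow> nat \<Rightarrow> nat \<Rightarrow> bool" where
  "cadj N a b \<longleftrightarrow> a = (b + 1) mod N \<or> b = (a + 1) mod N"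

definition GE :: "nat \<Rightarrow> (nat \<times> nat) set set" where
  "GE n = {{(a, b), (c, d)} | a b c d.
     (a, b) \<in> GV n \<and> (c, d) \<in> GV n \<and>
     ((a = c \<and> cadj (4 ^ n) b d) \<or> (b = d \<and> cadj (4 ^ n) a c))}"

definition pos :: "'a list \<Rightarrow> 'a \<Rightarrow> nat" where
  "pos es v = (THE p. p < length es \<and> es ! p = v)"

definition Phi :: "nat list list \<Rightarrow> nat list \<times> nat list \<Rightarrow> nat \<times> nat" where
  "Phi es x = (pos es (fst x), pos es (snd x))"

definition fmap :: "nat \<Rightarrow> nat list list \<Rightarrow> (nat \<times> nat) set set \<Rightarrow> (nat list \<times> nat list) set set" where
  "fmap n es H = {{x, y} | x y. x \<in> QV2 n \<and> y \<in> QV2 n \<and> {Phi es x, Phi es y} \<in> H}"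

end

theory Submission
  imports Defs
begin

lemma card_QV: "card (QV n) = 4 ^ n"
proof -
  have "QV n = {xs. set xs \<subseteq> {0..<4} \<and> length xs = n}" unfolding QV_def by auto
  thus ?thesis using card_lists_length_eq[of "{0..<(4::nat)}" n] by simp
qed

lemma pos_nth: "distinct es \<Longrightarrow> i < length es \<Longrightarrow> pos es (es ! i) = i"
  unfolding pos_def by (rule the_equality) (auto simp: nth_eq_iff_index_eq)

lemma pos_in: "v \<in> set es \<Longrightarrow> distinct es \<Longrightarrow> pos es v < length es \<and> es ! pos es v = v"
proof -
  assume "v \<in> set es" "distinct es"
  then obtain i where i: "i < length es" "es ! i = v" by (auto simp: in_set_conv_nth)
  thus ?thesis using pos_nth[OF \<open>distinct es\<close> i(1)] by simp
qed

lemma pos_inj: "u \<in> set es \<Longrightarrow> v \<in> set es \<Longrightarrow> distinct es \<Longrightarrow> pos es u = pos es v \<longleftrightarrow> u = v"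
proof -
  assume a: "u \<in> set es" "v \<in> set es" "distinct es"
  have "es ! pos es u = u" "es ! pos es v = v" using pos_in[OF a(1) a(3)] pos_in[OF a(2) a(3)] by auto
  thus ?thesis by metis
qed

lemma cadj_sym: "cadj N a b = cadj N b a" unfolding cadj_def by auto

lemma cadj_irrefl: "b < N \<Longrightarrow> 2 \<le> N \<Longrightarrow> \<not> cadj N b b"
proof
  assume a: "b < N" "2 \<le> N" "cadj N b b"
  hence e: "b = (b + 1) mod N" unfolding cadj_def by auto
  show False
  proof (cases "b + 1 < N")
    case True thus False using e by simp
  next
    case False
    hence "b + 1 = N" using a by simp
    thus False using e a by simp
  qed
qed

lemma cyc_iff:
  assumes "distinct es"
  shows "{u, v} \<in> cycle_edges es \<longleftrightarrow> u \<in> set es \<and> v \<in> set es \<and> cadj (length es) (pos es u) (pos es v)"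
proof
  assume "{u, v} \<in> cycle_edges es"
  then obtain i where i: "i < length es" "{u,v} = {es ! i, es ! ((i+1) mod length es)}"
    unfolding cycle_edges_def by auto
  have l: "0 < length es" using i by auto
  have p1: "pos es (es ! i) = i" using pos_nth[OF assms i(1)] .
  have p2: "pos es (es ! ((i+1) mod length es)) = (i+1) mod length es"
    using pos_nth[OF assms] l by simp
  from i(2) have "(u = es ! i \<and> v = es ! ((i+1) mod length es)) \<or> (v = es ! i \<and> u = es ! ((i+1) mod length es))"
    by (auto simp: doubleton_eq_iff)
  thus "u \<in> set es \<and> v \<in> set es \<and> cadj (length es) (pos es u) (pos es v)"
    using p1 p2 i(1) l by (auto simp: cadj_def)
next
  assume a: "u \<in> set es \<and> v \<in> set es \<and> cadj (length es) (pos es u) (pos es v)"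
  have pu: "pos es u < length es" "es ! pos es u = u" using pos_in[of u es] a assms by auto
  have pv: "pos es v < length es" "es ! pos es v = v" using pos_in[of v es] a assms by auto
  from a consider "pos es u = (pos es v + 1) mod length es" | "pos es v = (pos es u + 1) mod length es"
    unfolding cadj_def by auto
  thus "{u, v} \<in> cycle_edges es"
  proof cases
    case 1
    then have "{u,v} = {es ! pos es v, es ! ((pos es v + 1) mod length es)}" using pu pv by auto
    thus ?thesis using pv unfolding cycle_edges_def by blast
  next
    case 2
    then have "{u,v} = {es ! pos es u, es ! ((pos es u + 1) mod length es)}" using pu pv by auto
    thus ?thesis using pu unfolding cycle_edges_def by blast
  qed
qed

definition gadj :: "nat \<Rightarrow> nat \<times> nat \<Rightarrow> nat \<times> nat \<Rightarrow> bool" where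
  "gadj n p q \<longleftrightarrow> p \<in> GV n \<and> q \<in> GV n \<and>
     ((fst p = fst q \<and> cadj (4 ^ n) (snd p) (snd q)) \<or> (snd p = snd q \<and> cadj (4 ^ n) (fst p) (fst q)))"

lemma GE_iff: "{p, q} \<in> GE n \<longleftrightarrow> gadj n p q"
proof
  assume "{p, q} \<in> GE n"
  then obtain a b c d where h: "{p,q} = {(a,b),(c,d)}" "(a, b) \<in> GV n" "(c, d) \<in> GV n"
     "((a = c \<and> cadj (4 ^ n) b d) \<or> (b = d \<and> cadj (4 ^ n) a c))"
    unfolding GE_def by blast
  from h(1) have "(p = (a,b) \<and> q = (c,d)) \<or> (p = (c,d) \<and> q = (a,b))" by (auto simp: doubleton_eq_iff)
  thus "gadj n p q" using h(2-4) unfolding gadj_def by (auto simp: cadj_sym)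
next
  assume "gadj n p q"
  moreover obtain a b c d where "p = (a,b)" "q = (c,d)" by (cases p, cases q) auto
  ultimately show "{p, q} \<in> GE n" unfolding gadj_def GE_def by auto
qed

lemma qadj_sym: "qadj u v = qadj v u" unfolding qadj_def by metis

lemma QE_iff: "{u, v} \<in> QE n \<longleftrightarrow> u \<in> QV n \<and> v \<in> QV n \<and> qadj u v"
proof
  assume "{u, v} \<in> QE n"
  then obtain a b where h: "{u,v} = {a,b}" "a \<in> QV n" "b \<in> QV n" "qadj a b"
    unfolding QE_def by blast
  from h(1) have "(u = a \<and> v = b) \<or> (u = b \<and> v = a)" by (auto simp: doubleton_eq_iff)
  thus "u \<in> QV n \<and> v \<in> QV n \<and> qadj u v" using h(2-4) by (auto simp: qadj_sym)
qed (auto simp: QE_def)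

lemma QE2_iff: "{x, y} \<in> QE2 n \<longleftrightarrow> x \<in> QV2 n \<and> y \<in> QV2 n \<and> qadj (fst x @ snd x) (fst y @ snd y)"
proof
  assume "{x, y} \<in> QE2 n"
  then obtain u w u' w' where h: "{x,y} = {(u,w),(u',w')}" "(u,w) \<in> QV2 n" "(u',w') \<in> QV2 n"
     "qadj (u @ w) (u' @ w')"
    unfolding QE2_def by blast
  from h(1) have "(x = (u,w) \<and> y = (u',w')) \<or> (x = (u',w') \<and> y = (u,w))" by (auto simp: doubleton_eq_iff)
  thus "x \<in> QV2 n \<and> y \<in> QV2 n \<and> qadj (fst x @ snd x) (fst y @ snd y)" using h(2-4) by (auto simp: qadj_sym)
next
  assume "x \<in> QV2 n \<and> y \<in> QV2 n \<and> qadj (fst x @ snd x) (fst y @ snd y)"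
  thus "{x, y} \<in> QE2 n" unfolding QE2_def by (cases x, cases y) auto
qed

lemma qadj_append:
  assumes "length u = n" "length w = n" "length u' = n" "length w' = n"
  shows "qadj (u @ w) (u' @ w') \<longleftrightarrow> (u = u' \<and> qadj w w') \<or> (w = w' \<and> qadj u u')"
proof
  assume "qadj (u @ w) (u' @ w')"
  then obtain k where k: "k < n + n" "\<forall>j < n + n. j \<noteq> k \<longrightarrow> (u@w) ! j = (u'@w') ! j"
    "((u@w) ! k = ((u'@w') ! k + 1) mod 4 \<or> (u'@w') ! k = ((u@w) ! k + 1) mod 4)"
    unfolding qadj_def using assms by auto
  show "(u = u' \<and> qadj w w') \<or> (w = w' \<and> qadj u u')"
  proof (cases "k < n")
    case True
    have "w = w'"
    proof (rule nth_equalityI)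
      fix j assume "j < length w"
      hence "(u@w) ! (n+j) = (u'@w') ! (n+j)" using k(2) True assms by auto
      thus "w ! j = w' ! j" using assms by (simp add: nth_append)
    qed (use assms in simp)
    moreover have "qadj u u'" unfolding qadj_def
    proof (intro conjI exI[of _ k])
      show "\<forall>j<length u. j \<noteq> k \<longrightarrow> u ! j = u' ! j"
      proof (intro allI impI)
        fix j assume "j < length u" "j \<noteq> k"
        hence "(u@w) ! j = (u'@w') ! j" using k(2) assms by auto
        thus "u ! j = u' ! j" using assms \<open>j < length u\<close> by (simp add: nth_append)
      qed
      show "u ! k = (u' ! k + 1) mod 4 \<or> u' ! k = (u ! k + 1) mod 4"
        using k(3) True assms by (simp add: nth_append)
    qed (use assms True in auto)
    ultimately show ?thesis by simp
  next
    case False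
    define k' where "k' = k - n"
    have kk: "k = n + k'" "k' < n" using False k(1) unfolding k'_def by auto
    have "u = u'"
    proof (rule nth_equalityI)
      fix j assume "j < length u"
      hence "(u@w) ! j = (u'@w') ! j" using k(2) False assms by auto
      thus "u ! j = u' ! j" using assms \<open>j < length u\<close> by (simp add: nth_append)
    qed (use assms in simp)
    moreover have "qadj w w'" unfolding qadj_def
    proof (intro conjI exI[of _ k'])
      show "\<forall>j<length w. j \<noteq> k' \<longrightarrow> w ! j = w' ! j"
      proof (intro allI impI)
        fix j assume "j < length w" "j \<noteq> k'"
        hence "(u@w) ! (n+j) = (u'@w') ! (n+j)" using k(2) kk assms by auto
        thus "w ! j = w' ! j" using assms by (simp add: nth_append)
      qed
      show "w ! k' = (w' ! k' + 1) mod 4 \<or> w' ! k' = (w ! k' + 1) mod 4"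
        using k(3) kk assms by (simp add: nth_append)
    qed (use assms kk in auto)
    ultimately show ?thesis by simp
  qed
next
  assume "(u = u' \<and> qadj w w') \<or> (w = w' \<and> qadj u u')"
  thus "qadj (u @ w) (u' @ w')"
  proof
    assume h: "u = u' \<and> qadj w w'"
    then obtain k where k: "k < n" "\<forall>j < n. j \<noteq> k \<longrightarrow> w ! j = w' ! j"
      "(w ! k = (w' ! k + 1) mod 4 \<or> w' ! k = (w ! k + 1) mod 4)"
      unfolding qadj_def using assms by auto
    show ?thesis unfolding qadj_def
    proof (intro conjI exI[of _ "n+k"])
      show "\<forall>j<length (u @ w). j \<noteq> n + k \<longrightarrow> (u @ w) ! j = (u' @ w') ! j"
      proof (intro allI impI)
        fix j assume j: "j < length (u @ w)" "j \<noteq> n + k"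
        show "(u @ w) ! j = (u' @ w') ! j"
        proof (cases "j < n")
          case True thus ?thesis using h assms by (simp add: nth_append)
        next
          case False
          then have "j - n < n" "j - n \<noteq> k" using j assms by auto
          thus ?thesis using False k(2) h assms by (simp add: nth_append)
        qed
      qed
    qed (use assms k in \<open>auto simp: nth_append\<close>)
  next
    assume h: "w = w' \<and> qadj u u'"
    then obtain k where k: "k < n" "\<forall>j < n. j \<noteq> k \<longrightarrow> u ! j = u' ! j"
      "(u ! k = (u' ! k + 1) mod 4 \<or> u' ! k = (u ! k + 1) mod 4)"
      unfolding qadj_def using assms by auto
    show ?thesis unfolding qadj_def
    proof (intro conjI exI[of _ k])
      show "\<forall>j<length (u @ w). j \<noteq> k \<longrightarrow> (u @ w) ! j = (u' @ w') ! j"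
      proof (intro allI impI)
        fix j assume j: "j < length (u @ w)" "j \<noteq> k"
        show "(u @ w) ! j = (u' @ w') ! j"
        proof (cases "j < n")
          case True thus ?thesis using h k(2) j assms by (simp add: nth_append)
        next
          case False
          thus ?thesis using h assms by (simp add: nth_append)
        qed
      qed
    qed (use assms k in \<open>auto simp: nth_append\<close>)
  qed
qed

definition psi :: "nat list list \<Rightarrow> nat \<times> nat \<Rightarrow> nat list \<times> nat list" where
  "psi E p = (E ! fst p, E ! snd p)"

locale cyc =
  fixes n :: nat and E :: "nat list list"
  assumes dist: "distinct E" and setE: "set E = QV n" and lenE: "length E = 4 ^ n"
    and subE: "cycle_edges E \<subseteq> QE n" and n1: "1 \<le> n"
begin

lemma inE: "x \<in> QV2 n \<Longrightarrow> fst x \<in> set E \<and> snd x \<in> set E"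
proof -
  assume x: "x \<in> QV2 n"
  have "fst x \<in> QV n \<and> snd x \<in> QV n" using x unfolding QV2_def by (simp add: mem_Times_iff)
  thus ?thesis unfolding setE .
qed

lemma Phi_GV: "x \<in> QV2 n \<Longrightarrow> Phi E x \<in> GV n"
proof -
  assume x: "x \<in> QV2 n"
  have "fst x \<in> QV n \<and> snd x \<in> QV n" using x unfolding QV2_def by (simp add: mem_Times_iff)
  hence "fst x \<in> set E" "snd x \<in> set E" unfolding setE by blast+
  hence "pos E (fst x) < length E" "pos E (snd x) < length E" using pos_in[OF _ dist] by blast+
  hence "pos E (fst x) < 4 ^ n" "pos E (snd x) < 4 ^ n" unfolding lenE .
  thus ?thesis unfolding Phi_def GV_def by simp
qed

lemma psi_QV2: "p \<in> GV n \<Longrightarrow> psi E p \<in> QV2 n"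
proof -
  assume "p \<in> GV n"
  hence "fst p < length E" "snd p < length E" using lenE unfolding GV_def by auto
  hence "E ! fst p \<in> set E" "E ! snd p \<in> set E" by auto
  thus ?thesis using setE unfolding psi_def QV2_def by simp
qed

lemma Phi_psi: "p \<in> GV n \<Longrightarrow> Phi E (psi E p) = p"
proof -
  assume "p \<in> GV n"
  hence "fst p < length E" "snd p < length E" using lenE unfolding GV_def by auto
  hence "pos E (E ! fst p) = fst p" "pos E (E ! snd p) = snd p" using pos_nth[OF dist] by blast+
  thus ?thesis unfolding psi_def Phi_def by simp
qed

lemma psi_Phi: "x \<in> QV2 n \<Longrightarrow> psi E (Phi E x) = x"
proof -
  assume x: "x \<in> QV2 n"
  have "fst x \<in> QV n \<and> snd x \<in> QV n" using x unfolding QV2_def by (simp add: mem_Times_iff)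
  hence "fst x \<in> set E" "snd x \<in> set E" unfolding setE by blast+
  hence "E ! pos E (fst x) = fst x" "E ! pos E (snd x) = snd x" using pos_in[OF _ dist] by blast+
  thus ?thesis unfolding psi_def Phi_def by simp
qed

lemma phi_edge:
  assumes x: "x \<in> QV2 n" and y: "y \<in> QV2 n"
  shows "{Phi E x, Phi E y} \<in> GE n \<longleftrightarrow>
    (fst x = fst y \<and> {snd x, snd y} \<in> cycle_edges E) \<or> (snd x = snd y \<and> {fst x, fst y} \<in> cycle_edges E)"
proof -
  have in1: "fst x \<in> set E" "snd x \<in> set E" "fst y \<in> set E" "snd y \<in> set E"
    using inE[OF x] inE[OF y] by blast+
  have e1: "pos E (fst x) = pos E (fst y) \<longleftrightarrow> fst x = fst y"
    and e2: "pos E (snd x) = pos E (snd y) \<longleftrightarrow> snd x = snd y"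
    using pos_inj[OF _ _ dist] in1 by auto
  show ?thesis
    unfolding GE_iff gadj_def using Phi_GV[OF x] Phi_GV[OF y] e1 e2 in1
    by (auto simp: Phi_def cyc_iff[OF dist] lenE)
qed

lemma GE_ne: "{p, q} \<in> GE n \<Longrightarrow> p \<noteq> q"
proof
  assume "{p, q} \<in> GE n" "p = q"
  hence g: "gadj n p p" using GE_iff by metis
  have "(4::nat) ^ 1 \<le> 4 ^ n" by (rule power_increasing) (use n1 in auto)
  hence "2 \<le> (4::nat) ^ n" by simp
  thus False using g cadj_irrefl unfolding gadj_def GV_def by (cases p) auto
qed

lemma fmap_sub: "H \<subseteq> GE n \<Longrightarrow> fmap n E H \<subseteq> QE2 n"
proof
  fix e assume H: "H \<subseteq> GE n" and "e \<in> fmap n E H"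
  then obtain x y where e: "e = {x,y}" "x \<in> QV2 n" "y \<in> QV2 n" "{Phi E x, Phi E y} \<in> H"
    unfolding fmap_def by blast
  hence "{Phi E x, Phi E y} \<in> GE n" using H by auto
  hence c: "(fst x = fst y \<and> {snd x, snd y} \<in> cycle_edges E) \<or> (snd x = snd y \<and> {fst x, fst y} \<in> cycle_edges E)"
    using phi_edge e by auto
  have l: "length (fst x) = n" "length (snd x) = n" "length (fst y) = n" "length (snd y) = n"
    using e unfolding QV2_def QV_def by auto
  have "(fst x = fst y \<and> qadj (snd x) (snd y)) \<or> (snd x = snd y \<and> qadj (fst x) (fst y))"
    using c subE QE_iff by blast
  hence "qadj (fst x @ snd x) (fst y @ snd y)" using qadj_append[OF l] by simp
  thus "e \<in> QE2 n" using e QE2_iff by auto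
qed

lemma fmap_cycle:
  assumes "ham_cycle (GV n) (GE n) H"
  shows "ham_cycle (QV2 n) (QE2 n) (fmap n E H)"
proof -
  obtain vs where vs: "ham_list (GV n) (GE n) vs" "H = cycle_edges vs"
    using assms unfolding ham_cycle_def by auto
  have sv: "set vs = GV n" and dv: "distinct vs" and l3: "3 \<le> length vs" and ce: "cycle_edges vs \<subseteq> GE n"
    using vs(1) unfolding ham_list_def by auto
  have inj: "inj_on (psi E) (GV n)" by (metis Phi_psi inj_onI)
  have eq: "fmap n E H = cycle_edges (map (psi E) vs)"
  proof
    show "fmap n E H \<subseteq> cycle_edges (map (psi E) vs)"
    proof
      fix e assume "e \<in> fmap n E H"
      then obtain x y where e: "e = {x,y}" "x \<in> QV2 n" "y \<in> QV2 n" "{Phi E x, Phi E y} \<in> cycle_edges vs"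
        unfolding fmap_def vs(2) by blast
      then obtain i where i: "i < length vs" "{Phi E x, Phi E y} = {vs ! i, vs ! ((i+1) mod length vs)}"
        unfolding cycle_edges_def by auto
      have "psi E (Phi E x) = x" "psi E (Phi E y) = y" using e(2,3) psi_Phi by blast+
      hence "e = psi E ` {Phi E x, Phi E y}" using e(1) by simp
      also have "\<dots> = {psi E (vs ! i), psi E (vs ! ((i+1) mod length vs))}" using i by simp
      finally have ee: "e = {psi E (vs ! i), psi E (vs ! ((i+1) mod length vs))}" .
      have "0 < length vs" using i(1) by linarith
      hence "(i+1) mod length vs < length vs" by simp
      hence "e = {map (psi E) vs ! i, map (psi E) vs ! ((i+1) mod length (map (psi E) vs))}"
        using ee i(1) by simp
      thus "e \<in> cycle_edges (map (psi E) vs)"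
        unfolding cycle_edges_def mem_Collect_eq by (intro exI[of _ i]) (simp add: i(1))
    qed
  next
    show "cycle_edges (map (psi E) vs) \<subseteq> fmap n E H"
    proof
      fix e assume "e \<in> cycle_edges (map (psi E) vs)"
      then obtain i where i0: "i < length vs" "e = {map (psi E) vs ! i, map (psi E) vs ! ((i+1) mod length (map (psi E) vs))}"
        unfolding cycle_edges_def by auto
      have "0 < length vs" using i0(1) by linarith
      hence "(i+1) mod length vs < length vs" by simp
      hence i: "i < length vs" "e = {psi E (vs ! i), psi E (vs ! ((i+1) mod length vs))}"
        using i0 by simp_all
      have m: "vs ! i \<in> GV n" "vs ! ((i+1) mod length vs) \<in> GV n"
        using i(1) sv nth_mem by (metis, metis mod_less_divisor gr_implies_not0 neq0_conv)
      have "{vs ! i, vs ! ((i+1) mod length vs)} \<in> H"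
        unfolding vs(2) cycle_edges_def using i(1) by blast
      moreover have "Phi E (psi E (vs ! i)) = vs ! i" "Phi E (psi E (vs ! ((i+1) mod length vs))) = vs ! ((i+1) mod length vs)"
        using Phi_psi m by blast+
      moreover have "psi E (vs ! i) \<in> QV2 n" "psi E (vs ! ((i+1) mod length vs)) \<in> QV2 n"
        using psi_QV2 m by blast+
      ultimately show "e \<in> fmap n E H"
        unfolding fmap_def mem_Collect_eq
        by (intro exI[of _ "psi E (vs ! i)"] exI[of _ "psi E (vs ! ((i+1) mod length vs))"]) (simp add: i(2))
    qed
  qed
  have "ham_list (QV2 n) (QE2 n) (map (psi E) vs)"
    unfolding ham_list_def
  proof (intro conjI)
    show "distinct (map (psi E) vs)" using dv inj sv by (simp add: distinct_map)
    show "set (map (psi E) vs) = QV2 n"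
    proof
      show "set (map (psi E) vs) \<subseteq> QV2 n" using sv psi_QV2 by auto
      show "QV2 n \<subseteq> set (map (psi E) vs)"
      proof
        fix x assume "x \<in> QV2 n"
        thus "x \<in> set (map (psi E) vs)" using Phi_GV psi_Phi sv by (metis image_eqI set_map)
      qed
    qed
    show "3 \<le> length (map (psi E) vs)" using l3 by simp
    show "cycle_edges (map (psi E) vs) \<subseteq> QE2 n" using fmap_sub[OF ce[folded vs(2)]] eq by simp
  qed
  thus ?thesis unfolding ham_cycle_def using eq by auto
qed

end

theorem corollary1:
  fixes n :: nat
    and H :: "nat \<Rightarrow> (nat \<times> nat) set set"
    and es :: "nat \<Rightarrow> nat list list"
  assumes "1 \<le> n"
    and "ham_decomp (GV n) (GE n) {1, 2} H"
    and "\<forall>i\<in>{1..n}. ham_list (QV n) (QE n) (es i) \<and> es i ! 0 = replicate n 0"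
    and "ham_decomp (QV n) (QE n) {1..n} (\<lambda>i. cycle_edges (es i))"
  shows "ham_decomp (QV2 n) (QE2 n) ({1..n} \<times> {1, 2}) (\<lambda>(i, j). fmap n (es i) (H j))"
proof -
  have C: "cyc n (es i)" if "i \<in> {1..n}" for i
  proof -
    have h: "ham_list (QV n) (QE n) (es i)" using assms(3) that by auto
    hence "distinct (es i)" "set (es i) = QV n" "cycle_edges (es i) \<subseteq> QE n"
      unfolding ham_list_def by auto
    moreover have "length (es i) = 4 ^ n" using calculation card_QV distinct_card by metis
    ultimately show ?thesis using assms(1) by unfold_locales
  qed
  have Hc: "ham_cycle (GV n) (GE n) (H j)" if "j \<in> {1,2}" for j
    using assms(2) that unfolding ham_decomp_def by auto
  have Hd: "H 1 \<inter> H 2 = {}" and Hu: "H 1 \<union> H 2 = GE n"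
    using assms(2) unfolding ham_decomp_def by auto
  have HGE: "H j \<subseteq> GE n" if "j \<in> {1,2}" for j using Hu that by auto
  have Ed: "cycle_edges (es i) \<inter> cycle_edges (es i') = {}" if "i \<in> {1..n}" "i' \<in> {1..n}" "i \<noteq> i'" for i i'
    using assms(4) that unfolding ham_decomp_def by auto
  have Eu: "(\<Union>i\<in>{1..n}. cycle_edges (es i)) = QE n"
    using assms(4) unfolding ham_decomp_def by auto
  show ?thesis unfolding ham_decomp_def
  proof (intro conjI ballI impI)
    fix p assume "p \<in> {1..n} \<times> {1::nat, 2}"
    then obtain i j where "p = (i,j)" "i \<in> {1..n}" "j \<in> {1,2}" by auto
    thus "ham_cycle (QV2 n) (QE2 n) ((\<lambda>(i, j). fmap n (es i) (H j)) p)"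
      using cyc.fmap_cycle[OF C Hc] by auto
  next
    fix p q assume pq: "p \<in> {1..n} \<times> {1::nat, 2}" "q \<in> {1..n} \<times> {1::nat, 2}" "p \<noteq> q"
    obtain i j where p: "p = (i,j)" "i \<in> {1..n}" "j \<in> {1,2}" using pq by auto
    obtain i' j' where q: "q = (i',j')" "i' \<in> {1..n}" "j' \<in> {1,2}" using pq by auto
    interpret A: cyc n "es i" using C p by auto
    interpret B: cyc n "es i'" using C q by auto
    show "(\<lambda>(i, j). fmap n (es i) (H j)) p \<inter> (\<lambda>(i, j). fmap n (es i) (H j)) q = {}"
    proof (rule ccontr)
      assume "\<not> ?thesis"
      then obtain e where e1: "e \<in> fmap n (es i) (H j)" and e2: "e \<in> fmap n (es i') (H j')"
        using p q by auto
      obtain x y where xy: "e = {x,y}" "x \<in> QV2 n" "y \<in> QV2 n" "{Phi (es i) x, Phi (es i) y} \<in> H j"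
        using e1 unfolding fmap_def by blast
      obtain x' y' where xy': "e = {x',y'}" "x' \<in> QV2 n" "y' \<in> QV2 n" "{Phi (es i') x', Phi (es i') y'} \<in> H j'"
        using e2 unfolding fmap_def by blast
      have "{Phi (es i') x, Phi (es i') y} = Phi (es i') ` e" using xy by auto
      also have "\<dots> = {Phi (es i') x', Phi (es i') y'}" using xy' by auto
      finally have xy2: "{Phi (es i') x, Phi (es i') y} \<in> H j'" using xy' by simp
      show False
      proof (cases "i = i'")
        case True
        hence "j \<noteq> j'" using pq p q by auto
        hence "H j \<inter> H j' = {}" using Hd p q by (auto simp: Int_commute)
        thus False using xy(4) xy2 True by auto
      next
        case False
        have g1: "{Phi (es i) x, Phi (es i) y} \<in> GE n" using xy(4) HGE p by auto
        have g2: "{Phi (es i') x, Phi (es i') y} \<in> GE n" using xy2 HGE q by auto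
        have "x \<noteq> y" using A.GE_ne[OF g1] by auto
        have c1: "(fst x = fst y \<and> {snd x, snd y} \<in> cycle_edges (es i)) \<or> (snd x = snd y \<and> {fst x, fst y} \<in> cycle_edges (es i))"
          using A.phi_edge xy g1 by blast
        have c2: "(fst x = fst y \<and> {snd x, snd y} \<in> cycle_edges (es i')) \<or> (snd x = snd y \<and> {fst x, fst y} \<in> cycle_edges (es i'))"
          using B.phi_edge xy g2 by blast
        have "cycle_edges (es i) \<inter> cycle_edges (es i') = {}" using Ed p q False by auto
        thus False using c1 c2 \<open>x \<noteq> y\<close> by (cases x, cases y) auto
      qed
    qed
  next
    show "(\<Union>p\<in>{1..n} \<times> {1::nat, 2}. (\<lambda>(i, j). fmap n (es i) (H j)) p) = QE2 n"
    proof
      show "(\<Union>p\<in>{1..n} \<times> {1::nat, 2}. (\<lambda>(i, j). fmap n (es i) (H j)) p) \<subseteq> QE2 n"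
      proof (rule UN_least)
        fix p assume "p \<in> {1..n} \<times> {1::nat, 2}"
        then obtain i j where p: "p = (i,j)" "i \<in> {1..n}" "j \<in> {1::nat,2}" by auto
        show "(\<lambda>(i, j). fmap n (es i) (H j)) p \<subseteq> QE2 n"
          using cyc.fmap_sub[OF C[OF p(2)] HGE[OF p(3)]] p(1) by simp
      qed
      show "QE2 n \<subseteq> (\<Union>p\<in>{1..n} \<times> {1::nat, 2}. (\<lambda>(i, j). fmap n (es i) (H j)) p)"
      proof
        fix e assume "e \<in> QE2 n"
        then obtain x y where e: "e = {x,y}" "x \<in> QV2 n" "y \<in> QV2 n" "qadj (fst x @ snd x) (fst y @ snd y)"
          unfolding QE2_def by fastforce
        have l: "length (fst x) = n" "length (snd x) = n" "length (fst y) = n" "length (snd y) = n"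
          using e unfolding QV2_def QV_def by auto
        have q: "(fst x = fst y \<and> qadj (snd x) (snd y)) \<or> (snd x = snd y \<and> qadj (fst x) (fst y))"
          using qadj_append[OF l] e(4) by simp
        have v: "fst x \<in> QV n" "snd x \<in> QV n" "fst y \<in> QV n" "snd y \<in> QV n"
          using e unfolding QV2_def by auto
        obtain i where i: "i \<in> {1..n}"
          "(fst x = fst y \<and> {snd x, snd y} \<in> cycle_edges (es i)) \<or> (snd x = snd y \<and> {fst x, fst y} \<in> cycle_edges (es i))"
        proof (cases "fst x = fst y \<and> qadj (snd x) (snd y)")
          case True
          hence "{snd x, snd y} \<in> QE n" using v QE_iff by auto
          thus ?thesis using that True Eu by blast
        next
          case False
          hence "snd x = snd y \<and> {fst x, fst y} \<in> QE n" using q v QE_iff by auto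
          thus ?thesis using that Eu by blast
        qed
        interpret A: cyc n "es i" using C i by auto
        have "{Phi (es i) x, Phi (es i) y} \<in> GE n" using A.phi_edge e i by blast
        then obtain j where j: "j \<in> {1::nat,2}" "{Phi (es i) x, Phi (es i) y} \<in> H j" using Hu by auto
        have "e \<in> fmap n (es i) (H j)" unfolding fmap_def using e j by blast
        thus "e \<in> (\<Union>p\<in>{1..n} \<times> {1::nat, 2}. (\<lambda>(i, j). fmap n (es i) (H j)) p)"
          using i j by blast
      qed
    qed
  qed
qed

end
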